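(* Let $E$ be a nonempty bounded subset of $M_a$ and $p\in E$, and let positive reals $r_0,r_1,r_2,\dots$ be fixed with $E\subset \mathrm{GS}^n(E,p)\cap B_{r_n}(p)$ for every $n\ge0$. Then: (i) $\mathrm{GS}^n(E,p)-p$ is a real vector space for each $n\in\mathbb N$; (ii) $\mathrm{GS}^{n-1}(E,p)\subset\mathrm{GS}^n(E,p)$ for each $n\in\mathbb N$; (iii) $\mathrm{GS}^2(E,p)=\overline{\mathrm{GS}(E,p)}$, the closure of $\mathrm{GS}(E,p)$ in $M_a$; (iv) $\Lambda(\mathrm{GS}^n(E,p))=\Lambda(\mathrm{GS}^n(E,p)\cap B_{r_n}(p))$ for all $n\in\mathbb N$.
   Context: Let $a=\{a_i\}$ be a sequence of positive reals with $\sum_i a_i^2<\infty$, $M_a=\{x\in\mathbb{R}^{\mathbb N}:\sum_i a_i^2x_i^2<\infty\}$ with inner product $\langle x,y\rangle_a=\sum_i a_i^2x_iy_i$ and norm $\|\cdot\|_a$; $B_r(x)=\{y\in M_a:\|y-x\|_a<r\}$. $e_i$ denotes the sequence with $1$ in position $i$ and $0$ elsewhere. For nonempty $A\subset M_a$, $\Lambda(A)$ is the set of $i\in\mathbb N$ for which there exist $x\in A$ and $\alpha\ne0$ with $x+\alpha e_i\in A$. For $p\in A\subset M_a$, $\mathrm{GS}(A,p)=\{p+\sum_i\alpha_i(x_i-p)\in M_a: x_i\in A,\ \alpha_i\in\mathbb R\}$, the index running over a finite or countable subset of $\mathbb N$ and infinite sums being $\|\cdot\|_a$-limits of partial sums.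 Iterates: $\mathrm{GS}^0(E,p)=E$ and $\mathrm{GS}^n(E,p)=\mathrm{GS}\big(\mathrm{GS}^{n-1}(E,p)\cap B_{r_{n-1}}(p),\,p\big)$ for $n\in\mathbb N$. *)

theory Defs
  imports "HOL-Analysis.Analysis"
begin

definition Ma :: "(nat \<Rightarrow> real) \<Rightarrow> (nat \<Rightarrow> real) set" where
  "Ma a = {x. summable (\<lambda>i. (a i)\<^sup>2 * (x i)\<^sup>2)}"

definition inner_a :: "(nat \<Rightarrow> real) \<Rightarrow> (nat \<Rightarrow> real) \<Rightarrow> (nat \<Rightarrow> real) \<Rightarrow> real" where
  "inner_a a x y = (\<Sum>i. (a i)\<^sup>2 * x i * y i)"

definition norm_a :: "(nat \<Rightarrow> real) \<Rightarrow> (nat \<Rightarrow> real) \<Rightarrow> real" where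
  "norm_a a x = sqrt (inner_a a x x)"

definition ball_a :: "(nat \<Rightarrow> real) \<Rightarrow> (nat \<Rightarrow> real) \<Rightarrow> real \<Rightarrow> (nat \<Rightarrow> real) set" where
  "ball_a a x r = {y \<in> Ma a. norm_a a (\<lambda>k. y k - x k) < r}"

definition unitv :: "nat \<Rightarrow> nat \<Rightarrow> real" where
  "unitv i = (\<lambda>k. if k = i then 1 else 0)"

definition Lambda_set :: "(nat \<Rightarrow> real) set \<Rightarrow> nat set" where
  "Lambda_set A = {i. \<exists>x\<in>A. \<exists>\<alpha>::real. \<alpha> \<noteq> 0 \<and> (\<lambda>k. x k + \<alpha> * unitv i k) \<in> A}"

(* GS(A,p): p + sum_{i in I} alpha_i (x_i - p), I a finite or countable (infinite) subset of N;
   for infinite I the sum is the norm_a-limit of the partial sums taken in the natural order of I. *)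
definition GS :: "(nat \<Rightarrow> real) \<Rightarrow> (nat \<Rightarrow> real) set \<Rightarrow> (nat \<Rightarrow> real) \<Rightarrow> (nat \<Rightarrow> real) set" where
  "GS a A p = {y \<in> Ma a. \<exists>(I::nat set) (x::nat \<Rightarrow> nat \<Rightarrow> real) (\<alpha>::nat \<Rightarrow> real).
      (\<forall>i\<in>I. x i \<in> A) \<and>
      ((finite I \<and> y = (\<lambda>k. p k + (\<Sum>i\<in>I. \<alpha> i * (x i k - p k)))) \<or>
       (infinite I \<and>
        ((\<lambda>n. norm_a a (\<lambda>k. (p k + (\<Sum>i\<in>I \<inter> {..<n}. \<alpha> i * (x i k - p k))) - y k))
           \<longlonglongrightarrow> 0)))}"

fun GSit :: "(nat \<Rightarrow> real) \<Rightarrow> (nat \<Rightarrow> real) \<Rightarrow> (nat \<Rightarrow> real) set \<Rightarrow> (nat \<Rightarrow> real) \<Rightarrow> nat \<Rightarrow> (nat \<Rightarrow> real) set" where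
  "GSit a r E p 0 = E"
| "GSit a r E p (Suc n) = GS a (GSit a r E p n \<inter> ball_a a p (r n)) p"

definition closure_a :: "(nat \<Rightarrow> real) \<Rightarrow> (nat \<Rightarrow> real) set \<Rightarrow> (nat \<Rightarrow> real) set" where
  "closure_a a S = {y \<in> Ma a. \<forall>\<epsilon>>0. \<exists>z\<in>S. norm_a a (\<lambda>k. y k - z k) < \<epsilon>}"

definition is_real_vspace :: "(nat \<Rightarrow> real) set \<Rightarrow> bool" where
  "is_real_vspace V \<longleftrightarrow> (\<lambda>k. 0) \<in> V \<and>
     (\<forall>u\<in>V. \<forall>v\<in>V. (\<lambda>k. u k + v k) \<in> V) \<and>
     (\<forall>c::real. \<forall>u\<in>V. (\<lambda>k. c * u k) \<in> V)"

end

theory Submission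
  imports Defs
begin

lemma norm_a_alt: "norm_a a x = sqrt (\<Sum>i. (a i * x i)\<^sup>2)"
  unfolding norm_a_def inner_a_def by (simp add: power2_eq_square algebra_simps)

lemma Ma_alt: "x \<in> Ma a \<longleftrightarrow> summable (\<lambda>i. (a i * x i)\<^sup>2)"
  unfolding Ma_def by (simp add: power_mult_distrib)

lemma norm_a_nonneg: "x \<in> Ma a \<Longrightarrow> norm_a a x \<ge> 0"
  unfolding norm_a_alt Ma_alt by (simp add: suminf_nonneg)

lemma norm_a_zero[simp]: "norm_a a (\<lambda>k. 0) = 0"
  unfolding norm_a_alt by simp

lemma Ma_add: "u \<in> Ma a \<Longrightarrow> v \<in> Ma a \<Longrightarrow> (\<lambda>k. u k + v k) \<in> Ma a"
proof -
  assume u: "u \<in> Ma a" and v: "v \<in> Ma a"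
  have "summable (\<lambda>i. 2 * (a i * u i)\<^sup>2 + 2 * (a i * v i)\<^sup>2)"
    using u v unfolding Ma_alt by (intro summable_add summable_mult) auto
  moreover have "norm ((a i * (u i + v i))\<^sup>2) \<le> 2 * (a i * u i)\<^sup>2 + 2 * (a i * v i)\<^sup>2" for i
  proof -
    have "(a i * (u i + v i))\<^sup>2 = (a i * u i + a i * v i)\<^sup>2" by (simp add: algebra_simps)
    also have "\<dots> \<le> 2 * (a i * u i)\<^sup>2 + 2 * (a i * v i)\<^sup>2"
      by (smt (verit) zero_le_power2 power2_sum power2_diff)
    finally show ?thesis by simp
  qed
  ultimately show ?thesis unfolding Ma_alt by (rule summable_comparison_test'[where N=0])
qed

lemma Ma_scale: "u \<in> Ma a \<Longrightarrow> (\<lambda>k. c * u k) \<in> Ma a"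
  unfolding Ma_alt by (simp add: power_mult_distrib summable_mult algebra_simps)

lemma Ma_diff: "u \<in> Ma a \<Longrightarrow> v \<in> Ma a \<Longrightarrow> (\<lambda>k. u k - v k) \<in> Ma a"
  using Ma_add[of u a "\<lambda>k. (-1) * v k"] Ma_scale[of v a "-1"] by simp

lemma norm_a_scale: "u \<in> Ma a \<Longrightarrow> norm_a a (\<lambda>k. c * u k) = \<bar>c\<bar> * norm_a a u"
proof -
  assume u: "u \<in> Ma a"
  have "(\<Sum>i. (a i * (c * u i))\<^sup>2) = (\<Sum>i. c\<^sup>2 * (a i * u i)\<^sup>2)"
    by (simp add: power_mult_distrib algebra_simps)
  also have "\<dots> = c\<^sup>2 * (\<Sum>i. (a i * u i)\<^sup>2)"
    using u unfolding Ma_alt by (rule suminf_mult)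
  finally show ?thesis unfolding norm_a_alt by (simp add: real_sqrt_mult)
qed

lemma norm_a_triangle:
  assumes u: "u \<in> Ma a" and v: "v \<in> Ma a"
  shows "norm_a a (\<lambda>k. u k + v k) \<le> norm_a a u + norm_a a v"
proof -
  let ?f = "\<lambda>i. a i * u i" and ?g = "\<lambda>i. a i * v i"
  have sf: "summable (\<lambda>i. (?f i)\<^sup>2)" and sg: "summable (\<lambda>i. (?g i)\<^sup>2)"
    using u v unfolding Ma_alt by auto
  have sfg: "summable (\<lambda>i. (?f i + ?g i)\<^sup>2)"
    using Ma_add[OF u v] unfolding Ma_alt by (simp add: algebra_simps)
  have lim: "(\<lambda>n. sqrt (\<Sum>i<n. (?f i + ?g i)\<^sup>2)) \<longlonglongrightarrow> sqrt (\<Sum>i. (?f i + ?g i)\<^sup>2)"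
    by (intro tendsto_real_sqrt summable_LIMSEQ sfg)
  have "sqrt (\<Sum>i<n. (?f i + ?g i)\<^sup>2) \<le> norm_a a u + norm_a a v" for n
  proof -
    have "sqrt (\<Sum>i<n. (?f i + ?g i)\<^sup>2) = L2_set (\<lambda>i. ?f i + ?g i) {..<n}"
      by (simp add: L2_set_def)
    also have "\<dots> \<le> L2_set ?f {..<n} + L2_set ?g {..<n}" by (rule L2_set_triangle_ineq)
    also have "L2_set ?f {..<n} \<le> norm_a a u"
      unfolding L2_set_def norm_a_alt
      by (intro real_sqrt_le_mono sum_le_suminf sf) auto
    also have "L2_set ?g {..<n} \<le> norm_a a v"
      unfolding L2_set_def norm_a_alt
      by (intro real_sqrt_le_mono sum_le_suminf sg) auto
    finally show ?thesis by simp
  qed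
  then have "sqrt (\<Sum>i. (?f i + ?g i)\<^sup>2) \<le> norm_a a u + norm_a a v"
    by (intro LIMSEQ_le_const2[OF lim]) auto
  then show ?thesis unfolding norm_a_alt by (simp add: algebra_simps)
qed

lemma norm_a_unit: "norm_a a (\<lambda>k. c * unitv i k) = \<bar>c * a i\<bar>"
proof -
  have "(\<lambda>k. (a k * (c * unitv i k))\<^sup>2) = (\<lambda>k. if k = i then (a i * c)\<^sup>2 else 0)"
    by (auto simp: unitv_def)
  moreover have "(\<lambda>k. if k = i then (a i * c)\<^sup>2 else 0) sums (a i * c)\<^sup>2"
    using sums_single[of i "\<lambda>_. (a i * c)\<^sup>2"] by simp
  ultimately show ?thesis unfolding norm_a_alt by (simp add: sums_iff mult.commute)
qed

lemma norm_a_minus: "norm_a a (\<lambda>k. u k - v k) = norm_a a (\<lambda>k. v k - u k)"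
  unfolding norm_a_alt by (simp add: power2_eq_square algebra_simps)

definition psum :: "(nat \<Rightarrow> real) \<Rightarrow> (nat \<Rightarrow> nat \<Rightarrow> real) \<Rightarrow> (nat \<Rightarrow> real) \<Rightarrow> nat \<Rightarrow> nat \<Rightarrow> real" where
  "psum p x \<alpha> n = (\<lambda>k. p k + (\<Sum>i<n. \<alpha> i * (x i k - p k)))"

definition cv :: "(nat \<Rightarrow> real) \<Rightarrow> (nat \<Rightarrow> nat \<Rightarrow> real) \<Rightarrow> (nat \<Rightarrow> real) \<Rightarrow> bool" where
  "cv a S y \<longleftrightarrow> (\<lambda>n. norm_a a (\<lambda>k. S n k - y k)) \<longlonglongrightarrow> 0"

lemma psum_Ma: "(\<forall>i. x i \<in> Ma a) \<Longrightarrow> p \<in> Ma a \<Longrightarrow> psum p x \<alpha> n \<in> Ma a"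
proof (induction n)
  case 0
  then show ?case by (simp add: psum_def)
next
  case (Suc n)
  have "psum p x \<alpha> (Suc n) = (\<lambda>k. psum p x \<alpha> n k + \<alpha> n * (x n k - p k))"
    by (simp add: psum_def add.assoc)
  then show ?case using Suc by (simp add: Ma_add Ma_scale Ma_diff)
qed

lemma GS_canon:
  assumes A: "A \<subseteq> Ma a" and pA: "p \<in> A"
  shows "GS a A p = {y \<in> Ma a. \<exists>x \<alpha>. (\<forall>i. x i \<in> A) \<and> cv a (psum p x \<alpha>) y}"
proof (intro set_eqI iffI)
  fix y assume "y \<in> {y \<in> Ma a. \<exists>x \<alpha>. (\<forall>i. x i \<in> A) \<and> cv a (psum p x \<alpha>) y}"
  then obtain x \<alpha> where y: "y \<in> Ma a" "\<forall>i. x i \<in> A" "cv a (psum p x \<alpha>) y" by blast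
  show "y \<in> GS a A p" unfolding GS_def
    using y by (intro CollectI conjI exI[of _ UNIV] exI[of _ x] exI[of _ \<alpha>])
      (auto simp: cv_def psum_def)
next
  fix y assume "y \<in> GS a A p"
  then obtain I x \<alpha> where y: "y \<in> Ma a" "\<forall>i\<in>I. x i \<in> A" and
    alt: "(finite I \<and> y = (\<lambda>k. p k + (\<Sum>i\<in>I. \<alpha> i * (x i k - p k)))) \<or>
       (infinite I \<and>
        ((\<lambda>n. norm_a a (\<lambda>k. (p k + (\<Sum>i\<in>I \<inter> {..<n}. \<alpha> i * (x i k - p k))) - y k))
           \<longlonglongrightarrow> 0))" unfolding GS_def by blast
  define x' where "x' i = (if i \<in> I then x i else p)" for i
  define \<alpha>' where "\<alpha>' i = (if i \<in> I then \<alpha> i else 0)" for i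
  have x': "\<forall>i. x' i \<in> A" using y pA by (auto simp: x'_def)
  have ps: "psum p x' \<alpha>' n = (\<lambda>k. p k + (\<Sum>i\<in>I \<inter> {..<n}. \<alpha> i * (x i k - p k)))" for n
    unfolding psum_def
    by (rule ext, subst sum.inter_restrict[of "{..<n}", simplified Int_commute], simp)
      (intro arg_cong2[where f="(+)"] refl sum.cong, auto simp: x'_def \<alpha>'_def)
  have "cv a (psum p x' \<alpha>') y"
    using alt
  proof
    assume fin: "finite I \<and> y = (\<lambda>k. p k + (\<Sum>i\<in>I. \<alpha> i * (x i k - p k)))"
    then obtain N where N: "I \<subseteq> {..<N}" using finite_nat_bounded by blast
    have "eventually (\<lambda>n. norm_a a (\<lambda>k. psum p x' \<alpha>' n k - y k) = 0) sequentially"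
      unfolding eventually_sequentially
    proof (intro exI allI impI)
      fix n assume "N \<le> n"
      then have "I \<inter> {..<n} = I" using N by auto
      then show "norm_a a (\<lambda>k. psum p x' \<alpha>' n k - y k) = 0" using fin by (simp add: ps)
    qed
    then show ?thesis unfolding cv_def by (rule tendsto_eventually)
  next
    assume "infinite I \<and>
        ((\<lambda>n. norm_a a (\<lambda>k. (p k + (\<Sum>i\<in>I \<inter> {..<n}. \<alpha> i * (x i k - p k))) - y k))
           \<longlonglongrightarrow> 0)"
    then show ?thesis unfolding cv_def ps by simp
  qed
  then show "y \<in> {y \<in> Ma a. \<exists>x \<alpha>. (\<forall>i. x i \<in> A) \<and> cv a (psum p x \<alpha>) y}"
    using y x' by blast
qed

definition vsp :: "(nat \<Rightarrow> real) set \<Rightarrow> (nat \<Rightarrow> real) \<Rightarrow> bool" where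
  "vsp W p \<longleftrightarrow> p \<in> W \<and> (\<forall>u\<in>W. \<forall>v\<in>W. (\<lambda>k. u k + v k - p k) \<in> W) \<and>
     (\<forall>c. \<forall>u\<in>W. (\<lambda>k. p k + c * (u k - p k)) \<in> W)"

lemma vsp_real: "vsp W p \<Longrightarrow> is_real_vspace ((\<lambda>y. (\<lambda>k. y k - p k)) ` W)"
  unfolding is_real_vspace_def vsp_def
proof (intro conjI ballI allI)
  assume h: "p \<in> W \<and> (\<forall>u\<in>W. \<forall>v\<in>W. (\<lambda>k. u k + v k - p k) \<in> W) \<and>
     (\<forall>c. \<forall>u\<in>W. (\<lambda>k. p k + c * (u k - p k)) \<in> W)"
  show "(\<lambda>k. 0) \<in> (\<lambda>y k. y k - p k) ` W"
    using h by (intro image_eqI[of _ _ p]) auto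
  fix u v assume "u \<in> (\<lambda>y k. y k - p k) ` W" "v \<in> (\<lambda>y k. y k - p k) ` W"
  then obtain u' v' where "u' \<in> W" "v' \<in> W" "u = (\<lambda>k. u' k - p k)" "v = (\<lambda>k. v' k - p k)" by blast
  then show "(\<lambda>k. u k + v k) \<in> (\<lambda>y k. y k - p k) ` W"
    using h by (intro image_eqI[of _ _ "\<lambda>k. u' k + v' k - p k"]) auto
next
  fix c u
  assume h: "p \<in> W \<and> (\<forall>u\<in>W. \<forall>v\<in>W. (\<lambda>k. u k + v k - p k) \<in> W) \<and>
     (\<forall>c. \<forall>u\<in>W. (\<lambda>k. p k + c * (u k - p k)) \<in> W)"
  assume "u \<in> (\<lambda>y k. y k - p k) ` W"
  then obtain u' where "u' \<in> W" "u = (\<lambda>k. u' k - p k)" by blast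
  then show "(\<lambda>k. c * u k) \<in> (\<lambda>y k. y k - p k) ` W"
    using h by (intro image_eqI[of _ _ "\<lambda>k. p k + c * (u' k - p k)"]) auto
qed

lemma cv_comb:
  assumes S: "cv a S y1" and T: "cv a T y2" and SM: "\<And>n. S n \<in> Ma a" and TM: "\<And>n. T n \<in> Ma a"
    and y1: "y1 \<in> Ma a" and y2: "y2 \<in> Ma a" and pM: "p \<in> Ma a"
    and \<phi>: "filterlim \<phi> sequentially sequentially" and \<psi>: "filterlim \<psi> sequentially sequentially"
    and U: "\<And>n. U n = (\<lambda>k. S (\<phi> n) k + T (\<psi> n) k - p k)"
  shows "cv a U (\<lambda>k. y1 k + y2 k - p k)"
proof -
  have a1: "(\<lambda>n. norm_a a (\<lambda>k. S (\<phi> n) k - y1 k)) \<longlonglongrightarrow> 0"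
    using filterlim_compose[OF S[unfolded cv_def] \<phi>] by simp
  have a2: "(\<lambda>n. norm_a a (\<lambda>k. T (\<psi> n) k - y2 k)) \<longlonglongrightarrow> 0"
    using filterlim_compose[OF T[unfolded cv_def] \<psi>] by simp
  have le: "norm_a a (\<lambda>k. U n k - (y1 k + y2 k - p k)) \<le>
     norm_a a (\<lambda>k. S (\<phi> n) k - y1 k) + norm_a a (\<lambda>k. T (\<psi> n) k - y2 k)" for n
  proof -
    have "(\<lambda>k. U n k - (y1 k + y2 k - p k)) = (\<lambda>k. (S (\<phi> n) k - y1 k) + (T (\<psi> n) k - y2 k))"
      by (simp add: U algebra_simps)
    then show ?thesis using norm_a_triangle[OF Ma_diff[OF SM y1] Ma_diff[OF TM y2]] by simp
  qed
  have nn: "0 \<le> norm_a a (\<lambda>k. U n k - (y1 k + y2 k - p k))" for n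
    unfolding U by (intro norm_a_nonneg Ma_diff Ma_add SM TM y1 y2 pM)
  have "(\<lambda>n. norm_a a (\<lambda>k. U n k - (y1 k + y2 k - p k))) \<longlonglongrightarrow> 0"
    by (rule tendsto_sandwich[OF _ _ tendsto_const tendsto_add_zero[OF a1 a2]])
      (use nn le in auto)
  then show ?thesis unfolding cv_def .
qed

lemma interleave_sum:
  fixes m :: nat and \<alpha>1 \<alpha>2 :: "nat \<Rightarrow> real" and x1 x2 :: "nat \<Rightarrow> nat \<Rightarrow> real"
  shows "(\<Sum>j<m. (if even j then \<alpha>1 (j div 2) else \<alpha>2 (j div 2)) *
           ((if even j then x1 (j div 2) else x2 (j div 2)) k - p k)) =
   (\<Sum>i<(m+1) div 2. \<alpha>1 i * (x1 i k - p k)) + (\<Sum>i<m div 2. \<alpha>2 i * (x2 i k - p k))"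
proof (induction m)
  case 0
  then show ?case by simp
next
  case (Suc m)
  show ?case
  proof (cases "even m")
    case True
    then have "(Suc m + 1) div 2 = Suc ((m + 1) div 2)" "Suc m div 2 = m div 2" "(m+1) div 2 = m div 2"
      by presburger+
    then show ?thesis using Suc True by simp
  next
    case False
    then have "(Suc m + 1) div 2 = (m + 1) div 2" "Suc m div 2 = Suc (m div 2)" "(m+1) div 2 = Suc (m div 2)"
      by presburger+
    then show ?thesis using Suc False by simp
  qed
qed

lemma GS_vsp:
  assumes A: "A \<subseteq> Ma a" and pA: "p \<in> A"
  shows "vsp (GS a A p) p"
proof -
  have pM: "p \<in> Ma a" using A pA by auto
  have xM: "\<forall>i. x i \<in> A \<Longrightarrow> \<forall>i. x i \<in> Ma a" for x using A by auto
  note canon = GS_canon[OF A pA]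
  have zero: "p \<in> GS a A p"
    unfolding canon
    using pM pA by (intro CollectI conjI exI[of _ "\<lambda>_. p"] exI[of _ "\<lambda>_. 0"])
      (auto simp: cv_def psum_def)
  have add: "(\<lambda>k. u k + v k - p k) \<in> GS a A p" if u: "u \<in> GS a A p" and v: "v \<in> GS a A p" for u v
  proof -
    obtain x1 \<alpha>1 where u1: "u \<in> Ma a" "\<forall>i. x1 i \<in> A" "cv a (psum p x1 \<alpha>1) u"
      using u unfolding canon by blast
    obtain x2 \<alpha>2 where v1: "v \<in> Ma a" "\<forall>i. x2 i \<in> A" "cv a (psum p x2 \<alpha>2) v"
      using v unfolding canon by blast
    define x where "x j = (if even j then x1 (j div 2) else x2 (j div 2))" for j
    define \<alpha> where "\<alpha> j = (if even j then \<alpha>1 (j div 2) else \<alpha>2 (j div 2))" for j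
    have xA: "\<forall>i. x i \<in> A" using u1 v1 by (auto simp: x_def)
    have U: "psum p x \<alpha> n = (\<lambda>k. psum p x1 \<alpha>1 ((n+1) div 2) k + psum p x2 \<alpha>2 (n div 2) k - p k)" for n
      unfolding psum_def x_def \<alpha>_def by (rule ext) (simp add: interleave_sum)
    have f1: "filterlim (\<lambda>n::nat. (n+1) div 2) sequentially sequentially"
      unfolding filterlim_at_top eventually_sequentially
    proof (intro allI)
      fix Z :: nat show "\<exists>N. \<forall>n\<ge>N. Z \<le> (n+1) div 2" by (rule exI[of _ "2*Z"]) auto
    qed
    have f2: "filterlim (\<lambda>n::nat. n div 2) sequentially sequentially"
      unfolding filterlim_at_top eventually_sequentially
    proof (intro allI)
      fix Z :: nat show "\<exists>N. \<forall>n\<ge>N. Z \<le> n div 2" by (rule exI[of _ "2*Z"]) auto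
    qed
    have "cv a (psum p x \<alpha>) (\<lambda>k. u k + v k - p k)"
      by (rule cv_comb[OF u1(3) v1(3) psum_Ma psum_Ma u1(1) v1(1) pM f1 f2 U])
        (use xM u1 v1 pM in auto)
    moreover have "(\<lambda>k. u k + v k - p k) \<in> Ma a" using u1 v1 pM by (intro Ma_diff Ma_add)
    ultimately show ?thesis unfolding canon using xA by blast
  qed
  have scale: "(\<lambda>k. p k + c * (u k - p k)) \<in> GS a A p" if u: "u \<in> GS a A p" for u c
  proof -
    obtain x \<alpha> where u1: "u \<in> Ma a" "\<forall>i. x i \<in> A" "cv a (psum p x \<alpha>) u"
      using u unfolding canon by blast
    have e: "(\<lambda>k. psum p x (\<lambda>i. c * \<alpha> i) n k - (p k + c * (u k - p k))) =
       (\<lambda>k. c * (psum p x \<alpha> n k - u k))" for n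
      by (simp add: psum_def sum_distrib_left algebra_simps)
    have "(\<lambda>n. \<bar>c\<bar> * norm_a a (\<lambda>k. psum p x \<alpha> n k - u k)) \<longlonglongrightarrow> \<bar>c\<bar> * 0"
      using u1(3) unfolding cv_def by (intro tendsto_mult tendsto_const)
    then have "cv a (psum p x (\<lambda>i. c * \<alpha> i)) (\<lambda>k. p k + c * (u k - p k))"
      unfolding cv_def e using norm_a_scale[OF Ma_diff[OF psum_Ma[OF xM[OF u1(2)] pM] u1(1)]]
      by simp
    moreover have "(\<lambda>k. p k + c * (u k - p k)) \<in> Ma a" using u1 pM by (intro Ma_add Ma_scale Ma_diff)
    ultimately show ?thesis unfolding canon using u1 by blast
  qed
  show ?thesis unfolding vsp_def using zero add scale by blast
qed

lemma GS_Ma: "GS a A p \<subseteq> Ma a"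
  unfolding GS_def by (rule Collect_restrict)

lemma vsp_add: "vsp W p \<Longrightarrow> u \<in> W \<Longrightarrow> v \<in> W \<Longrightarrow> (\<lambda>k. u k + v k - p k) \<in> W"
  unfolding vsp_def by blast

lemma vsp_scale: "vsp W p \<Longrightarrow> u \<in> W \<Longrightarrow> (\<lambda>k. p k + c * (u k - p k)) \<in> W"
  unfolding vsp_def by blast

lemma vsp_in_ball:
  assumes WM: "W \<subseteq> Ma a" and V: "vsp W p" and w: "w \<in> W" and r: "r > 0"
  shows "\<exists>c>0. (\<lambda>k. p k + c * (w k - p k)) \<in> W \<inter> ball_a a p r"
proof -
  have pW: "p \<in> W" using V by (simp add: vsp_def)
  have dM: "(\<lambda>k. w k - p k) \<in> Ma a" using WM w pW by (intro Ma_diff) auto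
  define N where "N = norm_a a (\<lambda>k. w k - p k)"
  have N0: "N \<ge> 0" unfolding N_def by (rule norm_a_nonneg[OF dM])
  define c where "c = r / (2 * (N + 1))"
  have c0: "c > 0" using r N0 by (simp add: c_def)
  have "c * N < r"
  proof -
    have "c * N = r * N / (2 * (N + 1))" by (simp add: c_def)
    also have "\<dots> < r" using r N0 by (simp add: field_simps) (smt (verit) mult_nonneg_nonneg)
    finally show ?thesis .
  qed
  moreover have "norm_a a (\<lambda>k. (p k + c * (w k - p k)) - p k) = c * N"
    using norm_a_scale[OF dM, of c] c0 by (simp add: N_def)
  moreover have "(\<lambda>k. p k + c * (w k - p k)) \<in> W" using V w by (simp add: vsp_def)
  ultimately show ?thesis using c0 WM unfolding ball_a_def by (intro exI[of _ c]) auto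
qed

lemma closure_sub_GS:
  assumes WM: "W \<subseteq> Ma a" and V: "vsp W p" and r: "r > 0"
  shows "closure_a a W \<subseteq> GS a (W \<inter> ball_a a p r) p"
proof
  fix y assume "y \<in> closure_a a W"
  then have yM: "y \<in> Ma a" and yc: "\<forall>\<epsilon>>0. \<exists>z\<in>W. norm_a a (\<lambda>k. y k - z k) < \<epsilon>"
    unfolding closure_a_def by auto
  have pW: "p \<in> W" using V by (simp add: vsp_def)
  have pB: "p \<in> ball_a a p r" using pW WM r by (auto simp: ball_a_def)
  have "\<forall>m. \<exists>z. z \<in> W \<and> norm_a a (\<lambda>k. y k - z k) < inverse (real (Suc m))"
  proof
    fix m
    have "inverse (real (Suc m)) > 0" by simp
    then show "\<exists>z. z \<in> W \<and> norm_a a (\<lambda>k. y k - z k) < inverse (real (Suc m))"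
      using yc by blast
  qed
  then obtain z where z: "\<And>m. z m \<in> W" "\<And>m. norm_a a (\<lambda>k. y k - z m k) < inverse (real (Suc m))"
    by metis
  define z' where "z' n = (if n = 0 then p else z (n - 1))" for n
  have z'W: "z' n \<in> W" for n using z pW by (auto simp: z'_def)
  define w where "w i = (\<lambda>k. z' (Suc i) k + (p k + (-1) * (z' i k - p k)) - p k)" for i
  have wW: "w i \<in> W" for i
    unfolding w_def by (rule vsp_add[OF V z'W vsp_scale[OF V z'W]])
  have "\<forall>i. \<exists>c>0. (\<lambda>k. p k + c * (w i k - p k)) \<in> W \<inter> ball_a a p r"
    using vsp_in_ball[OF WM V wW r] by blast
  then obtain c where c: "\<And>i. c i > 0" "\<And>i. (\<lambda>k. p k + c i * (w i k - p k)) \<in> W \<inter> ball_a a p r"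
    by metis
  define x where "x i = (\<lambda>k. p k + c i * (w i k - p k))" for i
  define \<alpha> where "\<alpha> i = 1 / c i" for i
  have xA: "\<forall>i. x i \<in> W \<inter> ball_a a p r" using c by (simp add: x_def)
  have ps: "psum p x \<alpha> n = z' n" for n
  proof -
    have "\<alpha> i * (x i k - p k) = z' (Suc i) k - z' i k" for i k
      using c(1)[of i] by (simp add: \<alpha>_def x_def w_def)
    then have "(\<Sum>i<n. \<alpha> i * (x i k - p k)) = z' n k - z' 0 k" for k
      using sum_lessThan_telescope[of "\<lambda>i. z' i k" n] by simp
    then show ?thesis by (simp add: psum_def z'_def)
  qed
  have "cv a (psum p x \<alpha>) y"
  proof -
    have "(\<lambda>n. norm_a a (\<lambda>k. z' (Suc n) k - y k)) \<longlonglongrightarrow> 0"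
    proof (rule tendsto_sandwich[OF _ _ tendsto_const LIMSEQ_inverse_real_of_nat])
      show "\<forall>\<^sub>F n in sequentially. 0 \<le> norm_a a (\<lambda>k. z' (Suc n) k - y k)"
        by (intro always_eventually allI norm_a_nonneg Ma_diff) (use WM z'W yM in auto)
      show "\<forall>\<^sub>F n in sequentially. norm_a a (\<lambda>k. z' (Suc n) k - y k) \<le> inverse (real (Suc n))"
      proof (intro always_eventually allI)
        fix n
        have "norm_a a (\<lambda>k. z' (Suc n) k - y k) = norm_a a (\<lambda>k. y k - z n k)"
          unfolding z'_def using norm_a_minus[of a "z n" y] by simp
        then show "norm_a a (\<lambda>k. z' (Suc n) k - y k) \<le> inverse (real (Suc n))"
          using z(2)[of n] by simp
      qed
    qed
    then show ?thesis unfolding cv_def ps by (rule LIMSEQ_imp_Suc)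
  qed
  moreover have "W \<inter> ball_a a p r \<subseteq> Ma a" using WM by auto
  ultimately show "y \<in> GS a (W \<inter> ball_a a p r) p"
    unfolding GS_canon[OF \<open>W \<inter> ball_a a p r \<subseteq> Ma a\<close> IntI[OF pW pB]] using yM xA by blast
qed

lemma GS_sub_closure:
  assumes WM: "W \<subseteq> Ma a" and V: "vsp W p" and AW: "A \<subseteq> W" and pA: "p \<in> A"
  shows "GS a A p \<subseteq> closure_a a W"
proof
  fix y assume "y \<in> GS a A p"
  then obtain x \<alpha> where y: "y \<in> Ma a" "\<forall>i. x i \<in> A" "cv a (psum p x \<alpha>) y"
    unfolding GS_canon[OF order_trans[OF AW WM] pA] by blast
  have psW: "psum p x \<alpha> n \<in> W" for n
  proof (induction n)
    case 0
    then show ?case using pA AW by (auto simp: psum_def)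
  next
    case (Suc n)
    have "x n \<in> W" using y(2) AW by auto
    then have "(\<lambda>k. psum p x \<alpha> n k + (p k + \<alpha> n * (x n k - p k)) - p k) \<in> W"
      by (rule vsp_add[OF V Suc vsp_scale[OF V]])
    moreover have "psum p x \<alpha> (Suc n) = (\<lambda>k. psum p x \<alpha> n k + (p k + \<alpha> n * (x n k - p k)) - p k)"
      by (simp add: psum_def)
    ultimately show ?case by (simp only:)
  qed
  show "y \<in> closure_a a W"
    unfolding closure_a_def
  proof (intro CollectI conjI allI impI y(1))
    fix e :: real assume e: "e > 0"
    obtain N where "\<forall>n\<ge>N. norm (norm_a a (\<lambda>k. psum p x \<alpha> n k - y k) - 0) < e"
      using LIMSEQ_D[OF y(3)[unfolded cv_def] e] by blast
    then have "norm_a a (\<lambda>k. psum p x \<alpha> N k - y k) < e" by auto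
    then show "\<exists>z\<in>W. norm_a a (\<lambda>k. y k - z k) < e" using psW[of N] norm_a_minus[of a "psum p x \<alpha> N" y] by auto
  qed
qed

lemma W_sub_closure: "W \<subseteq> Ma a \<Longrightarrow> W \<subseteq> closure_a a W"
  unfolding closure_a_def by (auto intro!: bexI)

theorem lemma3p13:
  fixes a :: "nat \<Rightarrow> real" and E :: "(nat \<Rightarrow> real) set" and p :: "nat \<Rightarrow> real"
    and r :: "nat \<Rightarrow> real"
  assumes a_pos: "\<And>i. a i > 0"
    and a_sq: "summable (\<lambda>i. (a i)\<^sup>2)"
    and E_sub: "E \<subseteq> Ma a"
    and E_ne: "E \<noteq> {}"
    and E_bdd: "\<exists>C. \<forall>x\<in>E. norm_a a x \<le> C"
    and pE: "p \<in> E"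
    and r_pos: "\<And>n. r n > 0"
    and E_in: "\<And>n. E \<subseteq> GSit a r E p n \<inter> ball_a a p (r n)"
  shows "(\<forall>n\<ge>1. is_real_vspace ((\<lambda>y. (\<lambda>k. y k - p k)) ` GSit a r E p n))
       \<and> (\<forall>n\<ge>1. GSit a r E p (n - 1) \<subseteq> GSit a r E p n)
       \<and> GSit a r E p 2 = closure_a a (GS a E p)
       \<and> (\<forall>n\<ge>1. Lambda_set (GSit a r E p n) = Lambda_set (GSit a r E p n \<inter> ball_a a p (r n)))"
proof -
  let ?G = "GSit a r E p"
  have pM: "p \<in> Ma a" using pE E_sub by auto
  have GM: "?G n \<subseteq> Ma a" for n
    by (cases n) (simp_all add: GS_Ma E_sub)
  have pG: "p \<in> ?G n \<inter> ball_a a p (r n)" for n using E_in pE by blast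
  have BM: "?G n \<inter> ball_a a p (r n) \<subseteq> Ma a" for n using GM by auto
  have Vs: "vsp (?G n) p" if n1: "n \<ge> 1" for n
  proof -
    obtain m where n: "n = Suc m" using n1 by (cases n) auto
    show ?thesis unfolding n GSit.simps by (rule GS_vsp[OF BM pG])
  qed
  have i: "\<forall>n\<ge>1. is_real_vspace ((\<lambda>y. (\<lambda>k. y k - p k)) ` ?G n)"
    using Vs vsp_real by simp
  have ii: "\<forall>n\<ge>1. ?G (n - 1) \<subseteq> ?G n"
  proof (intro allI impI)
    fix n :: nat assume n1: "n \<ge> 1"
    show "?G (n - 1) \<subseteq> ?G n"
    proof (cases "n = 1")
      case True
      then show ?thesis using E_in[of 1] by simp
    next
      case False
      then obtain m where n: "n = Suc m" and m1: "m \<ge> 1" using n1 by (cases n) auto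
      have "?G m \<subseteq> closure_a a (?G m)" by (rule W_sub_closure[OF GM])
      also have "\<dots> \<subseteq> GS a (?G m \<inter> ball_a a p (r m)) p"
        by (rule closure_sub_GS[OF GM Vs[OF m1] r_pos])
      finally show ?thesis by (simp add: n)
    qed
  qed
  have G1: "?G 1 = GS a E p"
  proof -
    have "E \<inter> ball_a a p (r 0) = E" using E_in[of 0] by auto
    then show ?thesis by simp
  qed
  have iii: "?G 2 = closure_a a (GS a E p)"
  proof
    have "?G 2 = GS a (?G 1 \<inter> ball_a a p (r 1)) p" by (simp add: numeral_2_eq_2)
    also have "\<dots> \<subseteq> closure_a a (?G 1)"
      by (rule GS_sub_closure[OF GM Vs[of 1] _ pG]) auto
    finally show "?G 2 \<subseteq> closure_a a (GS a E p)" using G1 by simp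
  next
    have "closure_a a (?G 1) \<subseteq> GS a (?G 1 \<inter> ball_a a p (r 1)) p"
      by (rule closure_sub_GS[OF GM Vs r_pos]) simp
    also have "\<dots> = ?G 2" by (simp add: numeral_2_eq_2)
    finally show "closure_a a (GS a E p) \<subseteq> ?G 2" using G1 by simp
  qed
  have iv: "\<forall>n\<ge>1. Lambda_set (?G n) = Lambda_set (?G n \<inter> ball_a a p (r n))"
  proof (intro allI impI)
    fix n :: nat assume n1: "n \<ge> 1"
    note V = Vs[OF n1]
    show "Lambda_set (?G n) = Lambda_set (?G n \<inter> ball_a a p (r n))"
    proof
      show "Lambda_set (?G n \<inter> ball_a a p (r n)) \<subseteq> Lambda_set (?G n)"
        unfolding Lambda_set_def by blast
    next
      show "Lambda_set (?G n) \<subseteq> Lambda_set (?G n \<inter> ball_a a p (r n))"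
      proof
        fix i assume "i \<in> Lambda_set (?G n)"
        then obtain x \<alpha> where x: "x \<in> ?G n" "\<alpha> \<noteq> 0" "(\<lambda>k. x k + \<alpha> * unitv i k) \<in> ?G n"
          unfolding Lambda_set_def by blast
        have pGn: "p \<in> ?G n" using pG by blast
        have d: "(\<lambda>k. (x k + \<alpha> * unitv i k) + (p k + (-1) * (x k - p k)) - p k) \<in> ?G n"
          by (rule vsp_add[OF V x(3) vsp_scale[OF V x(1)]])
        have d2: "(\<lambda>k. p k + c * (\<alpha> * unitv i k)) \<in> ?G n" for c
        proof -
          have "(\<lambda>k. p k + c * ((x k + \<alpha> * unitv i k) + (p k + (-1) * (x k - p k)) - p k - p k)) \<in> ?G n"
            by (rule vsp_scale[OF V d])
          then show ?thesis by (simp add: algebra_simps)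
        qed
        define c where "c = r n / (2 * \<bar>\<alpha> * a i\<bar>)"
        have ai: "a i > 0" by (rule a_pos)
        have c0: "c > 0" using x(2) ai r_pos[of n] by (simp add: c_def)
        have mem: "(\<lambda>k. p k + (c * \<alpha>) * unitv i k) \<in> ?G n"
          using d2[of c] by (simp add: mult.assoc)
        have nrm: "norm_a a (\<lambda>k. (p k + (c * \<alpha>) * unitv i k) - p k) = r n / 2"
        proof -
          have "norm_a a (\<lambda>k. (p k + (c * \<alpha>) * unitv i k) - p k) = \<bar>c * \<alpha> * a i\<bar>"
            using norm_a_unit[of a "c * \<alpha>" i] by simp
          also have "\<dots> = c * \<bar>\<alpha> * a i\<bar>" using c0 by (simp add: abs_mult)
          also have "\<dots> = r n / 2" using x(2) ai by (simp add: c_def)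
          finally show ?thesis .
        qed
        have "(\<lambda>k. p k + (c * \<alpha>) * unitv i k) \<in> ?G n \<inter> ball_a a p (r n)"
          using mem GM nrm r_pos[of n] unfolding ball_a_def by auto
        moreover have "c * \<alpha> \<noteq> 0" using c0 x(2) by simp
        ultimately show "i \<in> Lambda_set (?G n \<inter> ball_a a p (r n))"
          unfolding Lambda_set_def using pG[of n] by blast
      qed
    qed
  qed
  show ?thesis using i ii iii iv by blast
qed

end
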